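(* The set of elements $(d,e;m)\in\mathcal{E}$ with $d\geq e$ whose vector $m$ has at most $7$ nonzero entries is finite, and consists exactly of $$(0,0;-1),\ (1,0;1),\ (1,1;1^{\times3}),\ (2,1;1^{\times5}),\ (2,2;2,1^{\times5}),$$ $$(3,1;1^{\times7}),\ (3,2;2^{\times2},1^{\times5}),\ (3,3;2^{\times4},1^{\times3}),\ (4,3;2^{\times6},1),\ (4,4;3,2^{\times6}).$$
   Context: Notation: $x^{\times l}$ denotes $x$ repeated $l$ times; trailing zeros of $m$ are ignored. The set $\mathcal{E}$: a Cremona transform of an integer tuple $(\delta;n_1,\dots,n_k)$ with $n_1\geq\dots\geq n_k$ is $(2\delta-n_1-n_2-n_3;\delta-n_2-n_3,\delta-n_1-n_3,\delta-n_1-n_2,n_4,\dots,n_k)$; a Cremona move is a Cremona transform followed by a permutation of the entries after the semicolon. $\mathcal{E}$ consists of $(0,0;-1)$ together with all integer tuples $(d,e;m_1,\dots,m_M)$ with $d,e\geq0$, $m_1\geq\dots\geq m_M\geq0$, satisfying $\sum m_i=2(d+e)-1$, $\sum m_i^2=2de+1$, and such that $(d+e-m_1;d-m_1,e-m_1,m_2,\dots,m_M)$ reduces to $(0;-1,0,\dots,0)$ by repeated Cremona moves. (Equivalently, classes $dS_1+eS_2-\sum m_iF_i$ in the $M$-fold blow-up of $S^2\times S^2$ represented by symplectically embedded $(-1)$-spheres.) $\mathcal{E}$ is symmetric under swapping $d$ and $e$. *)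

theory Defs
  imports Main "HOL-Library.Multiset"
begin

text \<open>A tuple (delta; n_1,...,n_k) is represented as a pair of an integer and an
  integer list.  Cremona transform of a tuple whose entries are sorted decreasingly
  (at least three entries; trailing zeros may be appended freely, see below).\<close>

fun cremona_transform :: "int \<Rightarrow> int list \<Rightarrow> int \<times> int list" where
  "cremona_transform \<delta> (n1 # n2 # n3 # rest) =
     (2 * \<delta> - n1 - n2 - n3, (\<delta> - n2 - n3) # (\<delta> - n1 - n3) # (\<delta> - n1 - n2) # rest)"
| "cremona_transform \<delta> ns = (\<delta>, ns)"

inductive cremona_reduces :: "int \<times> int list \<Rightarrow> int \<times> int list \<Rightarrow> bool" where
  refl: "cremona_reduces x x"
| perm: "mset ns' = mset ns \<Longrightarrow> cremona_reduces (\<delta>, ns') y \<Longrightarrow> cremona_reduces (\<delta>, ns) y"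
| pad: "cremona_reduces (\<delta>, ns @ [0]) y \<Longrightarrow> cremona_reduces (\<delta>, ns) y"
| unpad: "cremona_reduces (\<delta>, ns) y \<Longrightarrow> cremona_reduces (\<delta>, ns @ [0]) y"
| move: "sorted_wrt (\<ge>) ns \<Longrightarrow> length ns \<ge> 3 \<Longrightarrow>
         cremona_reduces (cremona_transform \<delta> ns) y \<Longrightarrow> cremona_reduces (\<delta>, ns) y"

definition exc_classes :: "(int \<times> int \<times> int list) set" where
  "exc_classes = {(0, 0, [-1])} \<union>
     {(d, e, m). d \<ge> 0 \<and> e \<ge> 0 \<and> sorted_wrt (\<ge>) m \<and> (\<forall>x\<in>set m. x \<ge> 0) \<and>
        sum_list m = 2 * (d + e) - 1 \<and>
        sum_list (map (\<lambda>x. x ^ 2) m) = 2 * d * e + 1 \<and>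
        (\<exists>m1 rest. m = m1 # rest \<and>
           cremona_reduces (d + e - m1, (d - m1) # (e - m1) # rest) (0, [-1]))}"

end

theory Submission
  imports Defs
begin

fun gen :: "nat \<Rightarrow> int \<Rightarrow> int \<Rightarrow> int \<Rightarrow> int list list" where
"gen 0 mx S Q = (if S=0 \<and> Q=0 then [[]] else [])"
| "gen (Suc k) mx S Q = (if S=0 \<and> Q=0 then [[]] else []) @
    concat (map (\<lambda>x. map ((#) x) (gen k x (S-x) (Q-x*x))) (filter (\<lambda>x. x*x \<le> Q) [1..min mx S]))"

definition allgen where "allgen = concat (map (\<lambda>d. concat (map (\<lambda>e. map (\<lambda>m. (d,e,m))
   (gen 7 (2*(d+e)-1) (2*(d+e)-1) (2*d*e+1))) [0..min d (9-d)])) [0..9])"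

lemma allgen_val: "allgen = [(1, 0, [1]), (1, 1, replicate 3 1), (2, 1, replicate 5 1),
        (2, 2, 2 # replicate 5 1), (3, 1, replicate 7 1), (3, 2, replicate 2 2 @ replicate 5 1),
        (3, 3, replicate 4 2 @ replicate 3 1), (4, 3, replicate 6 2 @ [1]),
        (4, 4, 3 # replicate 6 2)]"
  unfolding allgen_def by code_simp

lemma gen_complete:
  "sorted_wrt (\<ge>) xs \<Longrightarrow> \<forall>x\<in>set xs. 0<x \<Longrightarrow> \<forall>x\<in>set xs. x \<le> mx \<Longrightarrow> length xs \<le> k \<Longrightarrow>
   sum_list xs = S \<Longrightarrow> sum_list (map (\<lambda>x. x^2) xs) = Q \<Longrightarrow> xs \<in> set (gen k mx S Q)"
proof (induction k arbitrary: xs mx S Q)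
  case 0
  then show ?case by auto
next
  case (Suc k)
  show ?case
  proof (cases xs)
    case Nil
    then show ?thesis using Suc.prems by auto
  next
    case (Cons x ys)
    have ys0: "sum_list ys \<ge> 0" using Suc.prems(2) Cons by (intro sum_list_nonneg) auto
    have ys1: "sum_list (map (\<lambda>x. x^2) ys) \<ge> 0" by (intro sum_list_nonneg) auto
    have x1: "1 \<le> x" "x \<le> mx" using Suc.prems Cons by auto
    have x2: "x \<le> S" using Suc.prems(5) Cons ys0 by auto
    have x3: "x*x \<le> Q" using Suc.prems(6) Cons ys1 by (auto simp: power2_eq_square)
    have "ys \<in> set (gen k x (S-x) (Q-x*x))"
      using Suc.prems Cons by (intro Suc.IH) (auto simp: power2_eq_square)
    moreover have "x \<in> set (filter (\<lambda>x. x*x \<le> Q) [1..min mx S])" using x1 x2 x3 by auto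
    ultimately show ?thesis using Cons by auto
  qed
qed

lemma sum_filter_nz: "f 0 = 0 \<Longrightarrow> sum_list (map f (filter (\<lambda>x. x \<noteq> 0) xs)) = sum_list (map f (xs::int list))"
  by (induction xs) auto

lemma cs_identity: "sum_list (map (\<lambda>x. (a*x - b)^2) xs) =
   a^2 * sum_list (map (\<lambda>x. x^2) xs) - 2*a*b*sum_list xs + int (length xs) * b^2" for xs :: "int list"
  by (induction xs) (auto simp: algebra_simps power2_eq_square)

lemma bound:
  fixes d e :: int and n :: "int list"
  assumes "d \<ge> 0" "e \<ge> 0" "length n \<le> 7" "sum_list n = 2*(d+e)-1"
    "sum_list (map (\<lambda>x. x^2) n) = 2*d*e+1"
  shows "d + e \<le> 9"
proof -
  define S where "S = 2*(d+e)-1"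
  define Q where "Q = 2*d*e+1"
  have "0 \<le> sum_list (map (\<lambda>x. (7*x - S)^2) n)" by (intro sum_list_nonneg) auto
  also have "\<dots> = 49*Q - 14*S*S + int (length n) * S^2"
    using cs_identity[of 7 S n] assms S_def Q_def by (simp add: power2_eq_square)
  also have "\<dots> \<le> 49*Q - 14*S*S + 7 * S^2"
    using assms(3) by (intro add_left_mono mult_right_mono) auto
  finally have h: "S*S \<le> 7*Q" by (simp add: power2_eq_square)
  have de: "4*d*e \<le> (d+e)*(d+e)" using zero_le_power2[of "d-e"] by (simp add: algebra_simps power2_eq_square)
  show ?thesis
  proof (rule ccontr)
    assume "\<not> d+e \<le> 9"
    then have s: "d+e \<ge> 10" by simp
    have "(d+e)*(d+e-8) \<ge> 10*2" using s by (intro mult_mono) auto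
    then show False using h de unfolding S_def Q_def by (simp add: algebra_simps)
  qed
qed

lemma move_sorted: "length ns \<ge> 3 \<Longrightarrow> cremona_reduces (cremona_transform \<delta> (rev (sort ns))) y \<Longrightarrow>
   cremona_reduces (\<delta>, ns) y"
  apply (rule cremona_reduces.perm[where ns' = "rev (sort ns)"])
   apply simp
  apply (rule cremona_reduces.move)
    apply (simp add: sorted_wrt_rev)
   apply simp
  apply assumption
  done

lemma unpad_rep: "cremona_reduces (\<delta>, xs) y \<Longrightarrow> cremona_reduces (\<delta>, xs @ replicate k 0) y"
proof (induction k)
  case 0 then show ?case by simp
next
  case (Suc k)
  have "xs @ replicate (Suc k) 0 = (xs @ replicate k 0) @ [0]" by (simp add: replicate_append_same[symmetric])
  then show ?case using Suc cremona_reduces.unpad[of \<delta> "xs @ replicate k 0" y] by simp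
qed

lemma finish: "sort ns = (-1) # replicate k 0 \<Longrightarrow> cremona_reduces (0, ns) (0, [-1])"
  apply (rule cremona_reduces.perm[where ns' = "[-1] @ replicate k 0"])
   apply (metis append_Cons append_Nil mset_sort)
  apply (rule unpad_rep)
  apply (rule cremona_reduces.refl)
  done

lemma in_exc0: "(1::int, 0::int, [1]::int list) \<in> exc_classes"
  unfolding exc_classes_def
  apply (simp add: numeral_eq_Suc)
  apply (rule finish[where k=1], simp add: numeral_eq_Suc)
  done

lemma in_exc1: "(1::int, 1::int, replicate 3 1::int list) \<in> exc_classes"
  unfolding exc_classes_def
  apply (simp add: numeral_eq_Suc)
  apply (rule move_sorted, simp, simp)
  apply (rule finish[where k=3], simp add: numeral_eq_Suc)
  done

lemma in_exc2: "(2::int, 1::int, replicate 5 1::int list) \<in> exc_classes"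
  unfolding exc_classes_def
  apply (simp add: numeral_eq_Suc)
  apply (rule move_sorted, simp, simp)
  apply (rule move_sorted, simp, simp)
  apply (rule finish[where k=5], simp add: numeral_eq_Suc)
  done

lemma in_exc3: "(2::int, 2::int, 2 # replicate 5 1::int list) \<in> exc_classes"
  unfolding exc_classes_def
  apply (simp add: numeral_eq_Suc)
  apply (rule move_sorted, simp, simp)
  apply (rule move_sorted, simp, simp)
  apply (rule finish[where k=6], simp add: numeral_eq_Suc)
  done

lemma in_exc4: "(3::int, 1::int, replicate 7 1::int list) \<in> exc_classes"
  unfolding exc_classes_def
  apply (simp add: numeral_eq_Suc)
  apply (rule move_sorted, simp, simp)
  apply (rule move_sorted, simp, simp)
  apply (rule move_sorted, simp, simp)
  apply (rule finish[where k=7], simp add: numeral_eq_Suc)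
  done

lemma in_exc5: "(3::int, 2::int, replicate 2 2 @ replicate 5 1::int list) \<in> exc_classes"
  unfolding exc_classes_def
  apply (simp add: numeral_eq_Suc)
  apply (rule move_sorted, simp, simp)
  apply (rule move_sorted, simp, simp)
  apply (rule move_sorted, simp, simp)
  apply (rule finish[where k=7], simp add: numeral_eq_Suc)
  done

lemma in_exc6: "(3::int, 3::int, replicate 4 2 @ replicate 3 1::int list) \<in> exc_classes"
  unfolding exc_classes_def
  apply (simp add: numeral_eq_Suc)
  apply (rule move_sorted, simp, simp)
  apply (rule move_sorted, simp, simp)
  apply (rule move_sorted, simp, simp)
  apply (rule finish[where k=7], simp add: numeral_eq_Suc)
  done

lemma in_exc7: "(4::int, 3::int, replicate 6 2 @ [1]::int list) \<in> exc_classes"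
  unfolding exc_classes_def
  apply (simp add: numeral_eq_Suc)
  apply (rule move_sorted, simp, simp)
  apply (rule move_sorted, simp, simp)
  apply (rule move_sorted, simp, simp)
  apply (rule move_sorted, simp, simp)
  apply (rule finish[where k=7], simp add: numeral_eq_Suc)
  done

lemma in_exc8: "(4::int, 4::int, 3 # replicate 6 2::int list) \<in> exc_classes"
  unfolding exc_classes_def
  apply (simp add: numeral_eq_Suc)
  apply (rule move_sorted, simp, simp)
  apply (rule move_sorted, simp, simp)
  apply (rule move_sorted, simp, simp)
  apply (rule move_sorted, simp, simp)
  apply (rule finish[where k=7], simp add: numeral_eq_Suc)
  done


lemma sub_dir:
  assumes "(d, e, m) \<in> exc_classes" "d \<ge> e" "length (filter (\<lambda>x. x \<noteq> 0) m) \<le> 7"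
  shows "(d, e, filter (\<lambda>x. x \<noteq> 0) m) \<in> set ((0,0,[-1]) # allgen)"
proof (cases "(d, e, m) = (0, 0, [-1])")
  case True then show ?thesis by simp
next
  case False
  define n where "n = filter (\<lambda>x. x \<noteq> 0) m"
  from assms(1) False have h: "d \<ge> 0" "e \<ge> 0" "sorted_wrt (\<ge>) m" "\<forall>x\<in>set m. x \<ge> 0"
    "sum_list m = 2 * (d + e) - 1" "sum_list (map (\<lambda>x. x ^ 2) m) = 2 * d * e + 1"
    unfolding exc_classes_def by auto
  have n1: "sum_list n = 2 * (d + e) - 1"
    using sum_filter_nz[of "\<lambda>x. x" m] h(5) unfolding n_def by simp
  have n2: "sum_list (map (\<lambda>x. x ^ 2) n) = 2 * d * e + 1"
    using sum_filter_nz[of "\<lambda>x. x^2" m] h(6) unfolding n_def by simp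
  have n3: "sorted_wrt (\<ge>) n" unfolding n_def using h(3) by (simp add: sorted_wrt_filter)
  have n4: "\<forall>x\<in>set n. 0 < x" unfolding n_def using h(4) by force
  have n5: "length n \<le> 7" using assms(3) n_def by simp
  have n6: "\<forall>x\<in>set n. x \<le> 2 * (d + e) - 1"
    using n4 n1 by (metis less_imp_le member_le_sum_list)
  have b: "d + e \<le> 9" using bound[OF h(1,2) n5 n1 n2] .
  have "n \<in> set (gen 7 (2*(d+e)-1) (2*(d+e)-1) (2*d*e+1))"
    using gen_complete[OF n3 n4 n6 n5 n1 n2] .
  moreover have "d \<in> set [0..9]" "e \<in> set [0..min d (9-d)]" using h(1,2) b assms(2) by auto
  ultimately have "(d, e, n) \<in> set allgen" unfolding allgen_def by fastforce
  then show ?thesis unfolding n_def by simp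
qed

lemma memA: "(d,e,m) \<in> exc_classes \<Longrightarrow> e \<le> d \<Longrightarrow> filter (\<lambda>x. x\<noteq>0) m = m \<Longrightarrow> length m \<le> 7 \<Longrightarrow>
   (d,e,m) \<in> {(d, e, filter (\<lambda>x. x \<noteq> 0) m) | d e m.
             (d, e, m) \<in> exc_classes \<and> d \<ge> e \<and> length (filter (\<lambda>x. x \<noteq> 0) m) \<le> 7}"
  apply (rule CollectI)
  apply (rule exI[of _ d], rule exI[of _ e], rule exI[of _ m])
  by simp

theorem lemma4p3:
  "finite {(d, e, filter (\<lambda>x. x \<noteq> 0) m) | d e m.
             (d, e, m) \<in> exc_classes \<and> d \<ge> e \<and> length (filter (\<lambda>x. x \<noteq> 0) m) \<le> 7}
   \<and> {(d, e, filter (\<lambda>x. x \<noteq> 0) m) | d e m.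
             (d, e, m) \<in> exc_classes \<and> d \<ge> e \<and> length (filter (\<lambda>x. x \<noteq> 0) m) \<le> 7}
     = {(0, 0, [-1]), (1, 0, [1]), (1, 1, replicate 3 1), (2, 1, replicate 5 1),
        (2, 2, 2 # replicate 5 1), (3, 1, replicate 7 1), (3, 2, replicate 2 2 @ replicate 5 1),
        (3, 3, replicate 4 2 @ replicate 3 1), (4, 3, replicate 6 2 @ [1]),
        (4, 4, 3 # replicate 6 2)}"
    (is "finite ?A \<and> ?A = ?B")
proof -
  have s1: "?A \<subseteq> ?B"
  proof
    fix t assume "t \<in> ?A"
    then obtain d e m where t: "t = (d, e, filter (\<lambda>x. x \<noteq> 0) m)" "(d, e, m) \<in> exc_classes"
      "d \<ge> e" "length (filter (\<lambda>x. x \<noteq> 0) m) \<le> 7" by blast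
    have "t \<in> set ((0,0,[-1]) # allgen)" using sub_dir[OF t(2-4)] t(1) by simp
    then show "t \<in> ?B" unfolding allgen_val by (simp only: set_simps)
  qed
  have z: "(0::int, 0::int, [-1::int]) \<in> exc_classes" unfolding exc_classes_def by simp
  have s2: "?B \<subseteq> ?A"
    apply (simp only: insert_subset empty_subsetI)
    apply (intro conjI TrueI memA z in_exc0 in_exc1 in_exc2 in_exc3 in_exc4 in_exc5 in_exc6 in_exc7 in_exc8)
    by (simp_all add: numeral_eq_Suc)
  from s1 s2 have "?A = ?B" by (rule subset_antisym)
  then show ?thesis by simp
qed

end
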